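(* Let $n\ge4$ be even and $x\in Y_1$. If $1\le i\le j\le n-1$, then $\nu_i(x)\le\nu_j(x)$ in the Bruhat order of $\mathcal F_n$.
   Context: $s_i=(i,i+1)$; permutations compose right to left. $\mathcal F_m$ is the set of fixed-point-free involutions in $S_m$ with conjugation action, height $\ell/2$, and Bruhat order the weakest partial order with $z\le tzt$ for transpositions $t$ with $\ell(z)\le\ell(tzt)$. Regard $\mathcal F_{n-2}\subset S_n$; $w_0$ longest element of $S_n$; $Y_1=\{w_0zs_{n-1}w_0:z\in\mathcal F_{n-2}\}$; $\sigma_j=s_j\cdots s_1$; $\nu_j(x)=\sigma_jx\sigma_j^{-1}$. *)

theory Defs
  imports "HOL-Combinatorics.Combinatorics"
begin

text \<open>Permutations of {1..n} are functions nat => nat that permute {1..n}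
  (fixing everything else). Composition is function composition (right to left).\<close>

definition S :: "nat \<Rightarrow> (nat \<Rightarrow> nat) set" where
  "S n = {p. p permutes {1..n}}"

definition len :: "nat \<Rightarrow> (nat \<Rightarrow> nat) \<Rightarrow> nat" where
  "len n p = card {(i, j). 1 \<le> i \<and> i < j \<and> j \<le> n \<and> p j < p i}"

definition FPF :: "nat \<Rightarrow> (nat \<Rightarrow> nat) set" where
  "FPF m = {z. z permutes {1..m} \<and> z \<circ> z = id \<and> (\<forall>i\<in>{1..m}. z i \<noteq> i)}"

definition s :: "nat \<Rightarrow> nat \<Rightarrow> nat" where
  "s i = transpose i (Suc i)"

definition w0 :: "nat \<Rightarrow> nat \<Rightarrow> nat" where
  "w0 n = (\<lambda>i. if 1 \<le> i \<and> i \<le> n then n + 1 - i else i)"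

fun sigma :: "nat \<Rightarrow> nat \<Rightarrow> nat" where
  "sigma 0 = id"
| "sigma (Suc j) = s (Suc j) \<circ> sigma j"

definition nu :: "nat \<Rightarrow> (nat \<Rightarrow> nat) \<Rightarrow> nat \<Rightarrow> nat" where
  "nu j x = sigma j \<circ> x \<circ> inv (sigma j)"

definition Y1 :: "nat \<Rightarrow> (nat \<Rightarrow> nat) set" where
  "Y1 n = {w0 n \<circ> z \<circ> s (n - 1) \<circ> w0 n | z. z \<in> FPF (n - 2)}"

definition bruhat_step :: "nat \<Rightarrow> (nat \<Rightarrow> nat) \<Rightarrow> (nat \<Rightarrow> nat) \<Rightarrow> bool" where
  "bruhat_step n y z \<longleftrightarrow> y \<in> FPF n \<and>
     (\<exists>a b. 1 \<le> a \<and> a < b \<and> b \<le> n \<and>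
        z = transpose a b \<circ> y \<circ> transpose a b \<and> len n y \<le> len n z)"

definition bruhat_le :: "nat \<Rightarrow> (nat \<Rightarrow> nat) \<Rightarrow> (nat \<Rightarrow> nat) \<Rightarrow> bool" where
  "bruhat_le n y z \<longleftrightarrow> y \<in> FPF n \<and> z \<in> FPF n \<and> (bruhat_step n)\<^sup>*\<^sup>* y z"

end

theory Submission
  imports Defs
begin

lemma s_mono:
  assumes "(i::nat) < j" "\<not> (i = k \<and> j = Suc k)"
  shows "s k i < s k j"
  using assms unfolding s_def transpose_def by auto

lemma s_range: "1 \<le> k \<Longrightarrow> Suc k \<le> n \<Longrightarrow> 1 \<le> y \<Longrightarrow> y \<le> n \<Longrightarrow> 1 \<le> s k y \<and> s k y \<le> n"
  unfolding s_def transpose_def by auto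

lemma len_step:
  assumes inv: "w \<circ> w = id" and k: "1 \<le> k" "Suc k \<le> n" and lt: "w k < w (Suc k)"
  shows "len n w \<le> len n (s k \<circ> w \<circ> s k)"
proof -
  let ?w' = "s k \<circ> w \<circ> s k"
  let ?A = "{(i, j). 1 \<le> i \<and> i < j \<and> j \<le> n \<and> w j < w i}"
  let ?B = "{(i, j). 1 \<le> i \<and> i < j \<and> j \<le> n \<and> ?w' j < ?w' i}"
  have ww: "w (w y) = y" for y using inv by (metis comp_apply id_apply)
  have ss: "s k (s k y) = y" for y unfolding s_def by simp
  have finB: "finite ?B"
    by (rule finite_subset[of _ "{1..n} \<times> {1..n}"]) auto
  have inj: "inj_on (\<lambda>(i, j). (s k i, s k j)) ?A"
    by (rule inj_onI) (auto simp: ss, metis ss, metis ss)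
  have img: "(\<lambda>(i, j). (s k i, s k j)) ` ?A \<subseteq> ?B"
  proof
    fix p assume "p \<in> (\<lambda>(i, j). (s k i, s k j)) ` ?A"
    then obtain i j where p: "p = (s k i, s k j)" and ij: "1 \<le> i" "i < j" "j \<le> n" "w j < w i"
      by auto
    have n1: "\<not> (i = k \<and> j = Suc k)" using ij lt by auto
    have n2: "\<not> (w j = k \<and> w i = Suc k)"
    proof
      assume h: "w j = k \<and> w i = Suc k"
      then have "j = w k" "i = w (Suc k)" using ww by metis+
      then show False using ij lt by simp
    qed
    have "s k i < s k j" by (rule s_mono[OF ij(2) n1])
    moreover have "s k (w j) < s k (w i)" by (rule s_mono[OF ij(4) n2])
    moreover have "1 \<le> s k i" using s_range[OF k, of i] ij by simp
    moreover have "s k j \<le> n" using s_range[OF k, of j] ij by simp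
    ultimately show "p \<in> ?B" using p by (simp add: ss)
  qed
  have "card ?A \<le> card ?B" using card_inj_on_le[OF inj img finB] .
  then show ?thesis unfolding len_def by simp
qed


lemma sigma_1: "sigma j 1 = Suc j"
  by (induction j) (auto simp: s_def)

lemma sigma_2: "1 \<le> j \<Longrightarrow> sigma j 2 = 1"
proof (induction j)
  case 0 then show ?case by simp
next
  case (Suc j)
  then show ?case
    by (cases j) (auto simp: s_def transpose_def)
qed

lemma sigma_perm: "Suc j \<le> n \<Longrightarrow> sigma j permutes {1..n}"
proof (induction j)
  case 0 then show ?case by (simp add: permutes_id id_def[symmetric])
next
  case (Suc j)
  have "s (Suc j) permutes {1..n}" unfolding s_def using Suc.prems
    by (intro permutes_swap_id) auto
  moreover have "sigma j permutes {1..n}" using Suc by simp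
  ultimately show ?case by (simp only: sigma.simps permutes_compose)
qed

lemma nu_Suc:
  assumes "Suc (Suc j) \<le> n"
  shows "nu (Suc j) x = s (Suc j) \<circ> nu j x \<circ> s (Suc j)"
proof -
  have b: "bij (sigma j)" using sigma_perm[of j n] assms permutes_bij by auto
  have "inv (s (Suc j) \<circ> sigma j) = inv (sigma j) \<circ> s (Suc j)"
    by (simp add: o_inv_distrib b s_def)
  then show ?thesis unfolding nu_def by (simp add: o_assoc)
qed

lemma conj_FPF:
  assumes p: "p permutes {1..n}" and w: "w \<in> FPF n"
  shows "p \<circ> w \<circ> inv p \<in> FPF n"
proof -
  have wp: "w permutes {1..n}" and ww: "w \<circ> w = id" and fp: "\<forall>i\<in>{1..n}. w i \<noteq> i"
    using w unfolding FPF_def by auto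
  have ip: "inv p permutes {1..n}" using permutes_inv[OF p] .
  have "p \<circ> w \<circ> inv p permutes {1..n}"
    by (intro permutes_compose wp p ip)
  moreover have "(p \<circ> w \<circ> inv p) \<circ> (p \<circ> w \<circ> inv p) = id"
  proof
    fix y
    have "w (w (inv p y)) = inv p y" using ww by (metis comp_apply id_apply)
    then show "((p \<circ> w \<circ> inv p) \<circ> (p \<circ> w \<circ> inv p)) y = id y"
      by (simp add: permutes_inverses[OF p])
  qed
  moreover have "\<forall>i\<in>{1..n}. (p \<circ> w \<circ> inv p) i \<noteq> i"
  proof
    fix i assume i: "i \<in> {1..n}"
    have "inv p i \<in> {1..n}" using permutes_in_image[OF ip] i by simp
    then have "w (inv p i) \<noteq> inv p i" using fp by auto
    then show "(p \<circ> w \<circ> inv p) i \<noteq> i"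
      by (metis comp_apply permutes_inverses(2)[OF p])
  qed
  ultimately show ?thesis unfolding FPF_def by auto
qed

lemma w0_perm: "w0 n permutes {1..n}"
  unfolding permutes_def
proof (intro conjI allI impI)
  fix x assume "x \<notin> {1..n}" then show "w0 n x = x" unfolding w0_def by auto
next
  fix y
  have inv: "w0 n (w0 n z) = z" for z unfolding w0_def by auto
  show "\<exists>!x. w0 n x = y"
    by (metis inv)
qed

lemma Y1_props:
  assumes "4 \<le> n" and "x \<in> Y1 n"
  shows "x \<in> FPF n" and "x 1 = 2"
proof -
  obtain z where x: "x = w0 n \<circ> z \<circ> s (n - 1) \<circ> w0 n" and z: "z \<in> FPF (n - 2)"
    using assms unfolding Y1_def by auto
  have zp: "z permutes {1..n-2}" and zz: "z \<circ> z = id" and zf: "\<forall>i\<in>{1..n-2}. z i \<noteq> i"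
    using z unfolding FPF_def by auto
  have zfix: "y \<notin> {1..n-2} \<Longrightarrow> z y = y" for y using zp unfolding permutes_def by auto
  have zin: "y \<in> {1..n-2} \<Longrightarrow> z y \<in> {1..n-2}" for y using permutes_in_image[OF zp] by auto
  have zzy: "z (z y) = y" for y using zz by (metis comp_apply id_apply)
  have sdef: "s (n - 1) = transpose (n - 1) n" using assms(1) unfolding s_def
    by (metis Suc_diff_1 bot_nat_0.extremum_strict le_trans not_le not_numeral_le_zero)
  have "x 1 = w0 n (z (s (n - 1) n))" using assms(1) x by (simp add: w0_def)
  also have "s (n - 1) n = n - 1" using sdef by simp
  also have "z (n - 1) = n - 1" proof -
    have "n - 1 \<notin> {1..n-2}" using assms(1) by auto
    then show ?thesis by (rule zfix)
  qed
  also have "w0 n (n - 1) = 2" using assms(1) unfolding w0_def by auto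
  finally show "x 1 = 2" .
  have sp: "s (n - 1) permutes {1..n}" using sdef assms(1) by (auto intro: permutes_swap_id)
  have zp': "z permutes {1..n}" using permutes_subset[OF zp] by auto
  let ?q = "z \<circ> s (n - 1)"
  have zn1: "z (n - 1) = n - 1" by (rule zfix) (use assms(1) in auto)
  have zn: "z n = n" by (rule zfix) (use assms(1) in auto)
  have n1: "n - 1 \<noteq> n" using assms(1) by auto
  have qp: "?q permutes {1..n}" by (intro permutes_compose sp zp')
  have qq: "?q (?q y) = y" for y
  proof (cases "y = n - 1 \<or> y = n")
    case True
    then show ?thesis
    proof
      assume "y = n - 1" then show ?thesis using sdef zn zn1 n1 by simp
    next
      assume "y = n" then show ?thesis using sdef zn zn1 n1 by simp
    qed
  next
    case False
    then have sy: "s (n - 1) y = y" using sdef by auto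
    have "z y \<noteq> n - 1 \<and> z y \<noteq> n"
    proof (cases "y \<in> {1..n-2}")
      case True
      then have "z y \<in> {1..n-2}" by (rule zin)
      then show ?thesis using assms(1) by auto
    next
      case f2: False
      then have "z y = y" by (rule zfix)
      then show ?thesis using False by simp
    qed
    then have "s (n - 1) (z y) = z y" using sdef by auto
    then show ?thesis using sy zzy by simp
  qed
  have qf: "?q y \<noteq> y" if "y \<in> {1..n}" for y
  proof (cases "y = n - 1 \<or> y = n")
    case True
    then show ?thesis
    proof
      assume "y = n - 1" then show ?thesis using sdef zn zn1 n1 by simp
    next
      assume "y = n" then show ?thesis using sdef zn zn1 n1 by simp
    qed
  next
    case False
    then have sy: "s (n - 1) y = y" using sdef by auto
    have "y \<in> {1..n-2}" using that False by auto
    then show ?thesis using sy zf by auto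
  qed
  have q: "?q \<in> FPF n" unfolding FPF_def using qp qq qf by auto
  have iw: "inv (w0 n) = w0 n"
    by (rule inv_unique_comp) (auto simp: w0_def fun_eq_iff)
  have "x = w0 n \<circ> ?q \<circ> inv (w0 n)" using x iw by (simp add: o_assoc)
  then show "x \<in> FPF n" using conj_FPF[OF w0_perm q] by simp
qed

lemma nu_FPF: "x \<in> FPF n \<Longrightarrow> Suc j \<le> n \<Longrightarrow> nu j x \<in> FPF n"
  unfolding nu_def by (intro conj_FPF sigma_perm)

lemma nu_at: "1 \<le> j \<Longrightarrow> x 1 = 2 \<Longrightarrow> Suc j \<le> n \<Longrightarrow> nu j x (Suc j) = 1"
proof -
  assume a: "1 \<le> j" "x 1 = 2" "Suc j \<le> n"
  have p: "sigma j permutes {1..n}" using sigma_perm a(3) .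
  have "inv (sigma j) (Suc j) = 1" using sigma_1[of j] permutes_inverses(2)[OF p, of 1] by simp
  then show ?thesis unfolding nu_def using a sigma_2 by simp
qed

theorem corollary3p6:
  fixes n i j :: nat and x :: "nat \<Rightarrow> nat"
  assumes "even n" and "4 \<le> n" and "x \<in> Y1 n"
    and "1 \<le> i" and "i \<le> j" and "j \<le> n - 1"
  shows "bruhat_le n (nu i x) (nu j x)"
proof -
  have xF: "x \<in> FPF n" and x1: "x 1 = 2" using Y1_props assms(2,3) by auto
  have step: "bruhat_step n (nu k x) (nu (Suc k) x)" if k: "1 \<le> k" "Suc (Suc k) \<le> n" for k
  proof -
    let ?w = "nu k x"
    have wF: "?w \<in> FPF n" using nu_FPF xF k by simp
    have wp: "?w permutes {1..n}" and ww: "?w \<circ> ?w = id" using wF unfolding FPF_def by auto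
    have a: "?w (Suc k) = 1" using nu_at[of k x n] k x1 by simp
    have "?w (Suc (Suc k)) \<in> {1..n}" using permutes_in_image[OF wp] k by simp
    moreover have "?w (Suc (Suc k)) \<noteq> ?w (Suc k)"
      using permutes_inj[OF wp] by (metis inj_eq n_not_Suc_n)
    ultimately have lt: "?w (Suc k) < ?w (Suc (Suc k))" using a by auto
    have "len n ?w \<le> len n (s (Suc k) \<circ> ?w \<circ> s (Suc k))"
      by (rule len_step[OF ww _ k(2) lt]) simp
    then show ?thesis unfolding bruhat_step_def using wF nu_Suc[OF k(2)] k
      by (intro conjI exI[of _ "Suc k"] exI[of _ "Suc (Suc k)"]) (auto simp: s_def)
  qed
  have "(bruhat_step n)\<^sup>*\<^sup>* (nu i x) (nu (i + d) x)" if "i + d \<le> n - 1" for d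
    using that
  proof (induction d)
    case 0 then show ?case by simp
  next
    case (Suc d)
    have "bruhat_step n (nu (i + d) x) (nu (Suc (i + d)) x)"
      using step[of "i + d"] Suc.prems assms(4) by simp
    then show ?case using Suc by (simp add: rtranclp.rtrancl_into_rtrancl)
  qed
  from this[of "j - i"] have "(bruhat_step n)\<^sup>*\<^sup>* (nu i x) (nu j x)" using assms by simp
  moreover have "nu i x \<in> FPF n" "nu j x \<in> FPF n" using nu_FPF xF assms by auto
  ultimately show ?thesis unfolding bruhat_le_def by simp
qed

end
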